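(* Suppose $F$ satisfies Assumption A1, $F\in MDA(\Lambda)$, Assumption A3, and $x_F=\infty$. For a threshold $a$ set $\beta=\bar F(a)$, $\eta=f(a)$, $\nu=-f'(a)$. Fix $x$ with $1/2<x\le1$ and let $p=p(a)$ satisfy $1-p=x\beta$. Let $q=F^{-1}(p)$ be the true $p$-quantile and $q^*$ the optimal value of $$\sup_{q'\ge a,\,g}\ q'\ \text{ s.t. }(1-\beta)+\int_a^{q'}g=p,\ \int_a^\infty g=\beta,\ g(a)=g(a+)=\eta,\ g'_+(a)\ge-\nu,\ g\text{ convex and }\ge0\text{ on }[a,\infty).$$ Then $\lim_{a\to\infty}q^*/q=1$.
   Context: $X$ is a continuous random variable with distribution function $F$, density $f$, $\bar F=1-F$, right endpoint $x_F=\sup\{x:F(x)<1\}$. $\Lambda(x)=\exp\{-e^{-x}\}$. $F\in MDA(\Lambda)$ means there exist $c_n>0$, $d_n$ with $c_n^{-1}(M_n-d_n)$ converging in distribution to $\Lambda$, $M_n$ the maximum of $n$ i.i.d. copies of $X$. Assumption A1: there exists $z<x_F$ such that on $(z,x_F)$, $F$ is twice differentiable and $f$ is positive, decreasing and convex. Assumption A3: $\lim_{x\uparrow x_F}\bar F(x)f'(x)/f(x)^2=-1$. $g(a+)$ is the right limit and $g'_+$ the right derivative. *)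

theory Defs
  imports "HOL-Analysis.Analysis"
begin

definition Gumbel :: "real \<Rightarrow> real" where
  "Gumbel x = exp (- exp (- x))"

text \<open>F in MDA(Lambda): the maximum M_n of n iid copies has distribution function F^n,
  so convergence in distribution of (M_n - d_n)/c_n to the continuous Lambda is
  pointwise convergence F(c_n x + d_n)^n -> Lambda(x) for all x.\<close>
definition MDA_Gumbel :: "(real \<Rightarrow> real) \<Rightarrow> bool" where
  "MDA_Gumbel F \<longleftrightarrow> (\<exists>c d :: nat \<Rightarrow> real. (\<forall>n. c n > 0) \<and>
      (\<forall>x. (\<lambda>n. F (c n * x + d n) ^ n) \<longlonglongrightarrow> Gumbel x))"

definition quantile :: "(real \<Rightarrow> real) \<Rightarrow> real \<Rightarrow> real" where
  "quantile F p = Inf {t. p \<le> F t}"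

definition assumption_A1 :: "(real \<Rightarrow> real) \<Rightarrow> (real \<Rightarrow> real) \<Rightarrow> bool" where
  "assumption_A1 F f \<longleftrightarrow> (\<exists>z. convex_on {z<..} f \<and>
       (\<forall>t>z. (F has_real_derivative f t) (at t) \<and> f differentiable (at t) \<and> f t > 0) \<and>
       (\<forall>s t. z < s \<and> s \<le> t \<longrightarrow> f t \<le> f s))"

definition assumption_A3 :: "(real \<Rightarrow> real) \<Rightarrow> (real \<Rightarrow> real) \<Rightarrow> bool" where
  "assumption_A3 F f \<longleftrightarrow>
     ((\<lambda>x. (1 - F x) * deriv f x / (f x)^2) \<longlongrightarrow> -1) at_top"

definition feasible :: "real \<Rightarrow> real \<Rightarrow> real \<Rightarrow> real \<Rightarrow> real \<Rightarrow> real set" where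
  "feasible a p \<beta> \<eta> \<nu> = {q'. q' \<ge> a \<and> (\<exists>g :: real \<Rightarrow> real.
       (g has_integral (p - (1 - \<beta>))) {a..q'} \<and>
       (g has_integral \<beta>) {a..} \<and>
       g a = \<eta> \<and> (g \<longlongrightarrow> \<eta>) (at_right a) \<and>
       (\<exists>d. (g has_real_derivative d) (at a within {a..}) \<and> d \<ge> - \<nu>) \<and>
       convex_on {a..} g \<and> (\<forall>t\<ge>a. g t \<ge> 0))}"

definition qstar :: "(real \<Rightarrow> real) \<Rightarrow> (real \<Rightarrow> real) \<Rightarrow> real \<Rightarrow> real \<Rightarrow> ereal" where
  "qstar F f x a = Sup (ereal ` feasible a (1 - x * (1 - F a)) (1 - F a) (f a) (- deriv f a))"

end

theory Submission imports Defs begin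

lemma tangent_right:
  fixes g :: "real \<Rightarrow> real"
  assumes cv: "convex_on {a..} g" and dg: "(g has_real_derivative d) (at a within {a..})"
    and t: "a \<le> t"
  shows "g t \<ge> g a + d * (t - a)"
proof (cases "t = a")
  case True then show ?thesis by simp
next
  case False
  with t have at: "a < t" by simp
  have lim: "((\<lambda>y. (g y - g a) / (y - a)) \<longlongrightarrow> d) (at a within {a<..})"
  proof -
    have l0: "((\<lambda>y. (g y - g a) / (y - a)) \<longlongrightarrow> d) (at a within {a..})"
      using dg unfolding has_field_derivative_iff .
    have "at a within {a<..} \<le> at a within {a..}" by (rule at_le) auto
    from tendsto_mono[OF this l0] show ?thesis .
  qed
  have ev: "eventually (\<lambda>y. (g y - g a) / (y - a) \<le> (g t - g a) / (t - a)) (at_right a)"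
    using eventually_at_right_real[OF at]
  proof eventually_elim
    fix y assume y: "y \<in> {a<..<t}"
    have "convex_on {a..t} g" using cv by (rule convex_on_subset) auto
    then have "g y \<le> (g t - g a) / (t - a) * (y - a) + g a"
      using y by (intro convex_onD_Icc') auto
    then have "g y - g a \<le> (g t - g a) / (t - a) * (y - a)" by simp
    then show "(g y - g a) / (y - a) \<le> (g t - g a) / (t - a)" using y
      by (simp add: divide_le_eq mult.commute)
  qed
  have "d \<le> (g t - g a) / (t - a)"
    using lim ev by (rule tendsto_upperbound) (simp add: trivial_limit_at_right_real)
  then show ?thesis using at by (simp add: field_simps)
qed

lemma integral_lower:
  fixes g :: "real \<Rightarrow> real"
  assumes cv: "convex_on {a..} g" and dg: "(g has_real_derivative d) (at a within {a..})"
    and dnu: "d \<ge> - \<nu>" and ga: "g a = \<eta>" and nonneg: "\<forall>t\<ge>a. g t \<ge> 0"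
    and nu: "\<nu> > 0" and eta: "\<eta> > 0"
    and I: "(g has_integral I) {a..q}" and q: "q > a + \<eta> / \<nu>"
  shows "I \<ge> \<eta>^2 / (2 * \<nu>)"
proof -
  define c where "c = a + \<eta> / \<nu>"
  have ac: "a \<le> c" using nu eta by (simp add: c_def)
  have sub: "{a..c} \<subseteq> {a..q}" using q by (simp add: c_def)
  have gq: "g integrable_on {a..q}" using I by blast
  have gint: "g integrable_on {a..c}"
    by (rule integrable_on_subinterval[OF gq sub])
  have nn: "\<forall>t\<in>{a..q}. 0 \<le> g t" using nonneg by simp
  have "integral {a..c} g \<le> integral {a..q} g"
    by (rule integral_subset_le[OF sub gint gq nn])
  also have "\<dots> = I" using I by blast
  finally have le1: "integral {a..c} g \<le> I" .
  define P where "P t = \<eta> * (t - a) - (\<nu> / 2) * ((t - a) * (t - a))" for t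
  have lin: "((\<lambda>t. \<eta> - \<nu> * (t - a)) has_integral (P c - P a)) {a..c}"
    using ac
  proof (rule fundamental_theorem_of_calculus)
    fix t assume "t \<in> {a..c}"
    have d1: "((\<lambda>t. t - a) has_real_derivative 1) (at t within {a..c})"
      by (rule derivative_eq_intros refl)+ simp
    have d2: "((\<lambda>t. (t - a) * (t - a)) has_real_derivative (1 * (t - a) + 1 * (t - a))) (at t within {a..c})"
      by (rule DERIV_mult[OF d1 d1])
    have "(P has_real_derivative (\<eta> * 1 - (\<nu> / 2) * (1 * (t - a) + 1 * (t - a)))) (at t within {a..c})"
      unfolding P_def[abs_def] by (intro DERIV_diff DERIV_cmult d1 d2)
    then show "(P has_vector_derivative (\<eta> - \<nu> * (t - a))) (at t within {a..c})"
      by (simp add: has_real_derivative_iff_has_vector_derivative algebra_simps)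
  qed
  have val: "P c - P a = \<eta>^2 / (2 * \<nu>)"
    using nu by (simp add: P_def c_def field_simps power2_eq_square)
  have "\<eta>^2 / (2 * \<nu>) \<le> integral {a..c} g"
  proof (rule has_integral_le[OF lin[unfolded val]])
    show "(g has_integral integral {a..c} g) {a..c}" using gint by blast
  next
    fix t assume t: "t \<in> {a..c}"
    have "g t \<ge> g a + d * (t - a)" using tangent_right[OF cv dg] t by auto
    moreover have "d * (t - a) \<ge> - \<nu> * (t - a)" using dnu t by (intro mult_right_mono) auto
    ultimately show "\<eta> - \<nu> * (t - a) \<le> g t" using ga by simp
  qed
  with le1 show ?thesis by simp
qed

lemma F_int:
  fixes F f :: "real \<Rightarrow> real"
  assumes dens: "\<forall>t. (f has_integral F t) {..t}" and st: "s \<le> t"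
  shows "(f has_integral (F t - F s)) {s..t}"
proof -
  have fi: "f integrable_on {s..t}"
    using dens by (intro integrable_on_subinterval[of f "{..t}"]) auto
  have j: "(f has_integral integral {s..t} f) {s..t}" using fi by blast
  have neg: "negligible ({..s} \<inter> {s..t})"
  proof -
    have "{..s} \<inter> {s..t} = {s}" using st by auto
    then show ?thesis by simp
  qed
  have "(f has_integral (F s + integral {s..t} f)) ({..s} \<union> {s..t})"
    using dens j neg by (intro has_integral_Un) auto
  moreover have "{..s} \<union> {s..t} = {..t}" using st by auto
  ultimately have "(f has_integral (F s + integral {s..t} f)) {..t}" by simp
  then have "F t = F s + integral {s..t} f" using dens has_integral_unique by blast
  then show ?thesis using j by simp
qed

lemma ratio_zero:
  fixes F f :: "real \<Rightarrow> real" and z :: real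
  assumes dF: "\<And>t. t > z \<Longrightarrow> (F has_real_derivative f t) (at t)"
    and df: "\<And>t. t > z \<Longrightarrow> f differentiable (at t)"
    and fpos: "\<And>t. t > z \<Longrightarrow> f t > 0"
    and Flt: "\<And>t. F t < 1"
    and A3: "((\<lambda>x. (1 - F x) * deriv f x / (f x)^2) \<longlongrightarrow> -1) at_top"
  shows "((\<lambda>t. (1 - F t) / f t / t) \<longlongrightarrow> 0) at_top"
proof -
  define h where "h t = (1 - F t) / f t" for t
  define k where "k t = (1 - F t) * deriv f t / (f t)^2" for t
  have dh: "(h has_real_derivative (- 1 - k t)) (at t)" if t: "t > z" for t
  proof -
    have d1: "((\<lambda>t. 1 - F t) has_real_derivative (0 - f t)) (at t)"
      by (intro DERIV_diff DERIV_const dF t)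
    have d2: "(f has_real_derivative deriv f t) (at t)"
      using df[OF t] by (simp add: DERIV_deriv_iff_real_differentiable)
    have "(h has_real_derivative ((0 - f t) * f t - (1 - F t) * deriv f t) / (f t * f t)) (at t)"
      unfolding h_def[abs_def] using fpos[OF t] by (intro DERIV_divide d1 d2) auto
    moreover have "((0 - f t) * f t - (1 - F t) * deriv f t) / (f t * f t) = - 1 - k t"
      using fpos[OF t] by (simp add: k_def field_simps power2_eq_square)
    ultimately show ?thesis by simp
  qed
  have hnn: "h t \<ge> 0" if "t > z" for t
    using fpos[OF that] Flt[of t] by (simp add: h_def)
  show ?thesis
  proof (rule order_tendstoI)
    fix y :: real assume y: "y < 0"
    show "eventually (\<lambda>t. y < (1 - F t) / f t / t) at_top"
      using eventually_gt_at_top[of "max z 0"]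
    proof eventually_elim
      case (elim t)
      then have "h t / t \<ge> 0" using hnn[of t] by simp
      then show ?case using y by (simp add: h_def)
    qed
  next
    fix e :: real assume e: "0 < e"
    have "eventually (\<lambda>t. k t > -1 - e/2 \<and> k t < -1 + e/2) at_top"
      using A3[folded k_def] e by (intro eventually_conj order_tendstoD) auto
    then obtain T0 where T0: "\<And>t. t \<ge> T0 \<Longrightarrow> k t > -1 - e/2 \<and> k t < -1 + e/2"
      by (auto simp: eventually_at_top_linorder)
    define T where "T = max T0 (max z 0) + 1"
    have Tz: "T > z" "T > 0" "T > T0" by (auto simp: T_def)
    have bound: "h t \<le> h T + e / 2 * t" if t: "t > T" for t
    proof -
      obtain \<xi> where xi: "T < \<xi>" "\<xi> < t" "h t - h T = (t - T) * (- 1 - k \<xi>)"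
        using MVT2[OF t, of h "\<lambda>s. - 1 - k s"] dh Tz by force
      have "- 1 - k \<xi> \<le> e / 2" using T0[of \<xi>] xi Tz by auto
      then have "(t - T) * (- 1 - k \<xi>) \<le> (t - T) * (e / 2)"
        using xi by (intro mult_left_mono) auto
      also have "\<dots> \<le> t * (e / 2)" using Tz e t by (intro mult_right_mono) auto
      finally show ?thesis using xi by (simp add: algebra_simps)
    qed
    show "eventually (\<lambda>t. (1 - F t) / f t / t < e) at_top"
      using eventually_gt_at_top[of "max T (2 * h T / e)"]
    proof eventually_elim
      case (elim t)
      then have tT: "t > T" and t2: "t > 2 * h T / e" by auto
      have tpos: "t > 0" using tT Tz by simp
      have "h T < e / 2 * t" using t2 e by (simp add: field_simps)
      with bound[OF tT] have "h t < e * t" by simp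
      then show ?case using tpos by (simp add: h_def[symmetric] divide_less_eq)
    qed
  qed
qed

lemma key:
  fixes F f :: "real \<Rightarrow> real" and x a z :: real
  assumes F_mono: "mono F"
    and F_cont: "continuous_on UNIV F"
    and F_top: "(F \<longlongrightarrow> 1) at_top"
    and f_nonneg: "\<forall>t. f t \<ge> 0"
    and f_density: "\<forall>t. (f has_integral F t) {..t}"
    and cvx: "convex_on {z<..} f"
    and df: "\<And>t. t > z \<Longrightarrow> f differentiable (at t)"
    and fpos: "\<And>t. t > z \<Longrightarrow> f t > 0"
    and fdec: "\<And>s t. z < s \<Longrightarrow> s \<le> t \<Longrightarrow> f t \<le> f s"
    and xF_inf: "\<forall>t. F t < 1"
    and x_gt: "1/2 < x" and x_le: "x \<le> 1"
    and az: "a > z" and dneg: "deriv f a < 0"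
    and small: "2 * (1 - x) * ((1 - F a) * (- deriv f a) / (f a)^2) < 1"
  shows "a \<le> quantile F (1 - x * (1 - F a)) \<and>
         quantile F (1 - x * (1 - F a)) \<in> feasible a (1 - x * (1 - F a)) (1 - F a) (f a) (- deriv f a) \<and>
         (\<forall>q'\<in>feasible a (1 - x * (1 - F a)) (1 - F a) (f a) (- deriv f a). q' \<le> a + f a / (- deriv f a))"
proof -
  define p where "p = 1 - x * (1 - F a)"
  define S where "S = {t. p \<le> F t}"
  define q where "q = quantile F p"
  have q_def': "q = Inf S" by (simp add: q_def quantile_def S_def)
  have beta: "1 - F a > 0" using xF_inf by auto
  have eta: "f a > 0" using fpos[OF az] .
  have nu: "- deriv f a > 0" using dneg by simp
  have "x * (1 - F a) \<le> 1 * (1 - F a)" using x_le beta by (intro mult_right_mono) auto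
  then have pFa: "F a \<le> p" by (simp add: p_def)
  have "x * (1 - F a) > 0" using x_gt beta by simp
  then have p1: "p < 1" by (simp add: p_def)
  have Flt: "F t < F a" if t: "t < a" for t
  proof -
    define s where "s = max t ((z + a) / 2)"
    have s: "z < s" "s < a" "t \<le> s" using t az unfolding s_def by (auto simp: less_max_iff_disj max_less_iff_conj)
    have "F t \<le> F s" using F_mono s by (auto dest: monoD)
    have I: "(f has_integral (F a - F s)) {s..a}" using F_int[OF f_density] s by simp
    have C: "((\<lambda>_. f a) has_integral (f a * (a - s))) {s..a}"
      using has_integral_const_real[of "f a" s a] s by (simp add: mult.commute)
    have "f a * (a - s) \<le> F a - F s"
      using has_integral_le[OF C I] fdec s by auto
    moreover have "f a * (a - s) > 0" using eta s by simp
    ultimately show ?thesis using \<open>F t \<le> F s\<close> by simp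
  qed
  have Sne: "S \<noteq> {}"
  proof -
    have "eventually (\<lambda>t. F t > p) at_top" using F_top p1 by (rule order_tendstoD)
    then obtain N where "\<And>t. t \<ge> N \<Longrightarrow> F t > p" by (auto simp: eventually_at_top_linorder)
    then have "N \<in> S" by (auto simp: S_def less_imp_le)
    then show ?thesis by auto
  qed
  have Slow: "\<And>t. t \<in> S \<Longrightarrow> a \<le> t"
  proof (rule ccontr)
    fix t assume "t \<in> S" "\<not> a \<le> t"
    then have "F t < F a" "p \<le> F t" using Flt by (auto simp: S_def)
    then show False using pFa by simp
  qed
  have bdd: "bdd_below S" using Slow by (rule bdd_belowI)
  have aq: "a \<le> q" unfolding q_def' using Sne Slow by (intro cInf_greatest) auto
  have clS: "closed S" unfolding S_def by (intro closed_Collect_le continuous_on_const F_cont)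
  have qS: "q \<in> S" unfolding q_def' using Sne bdd clS by (rule closed_contains_Inf)
  have Fq: "F q = p"
  proof -
    have pq: "p \<le> F q" using qS by (simp add: S_def)
    have cont: "\<forall>t. a \<le> t \<and> t \<le> q \<longrightarrow> isCont F t"
      using F_cont by (simp add: continuous_on_eq_continuous_at)
    obtain t where t: "a \<le> t" "t \<le> q" "F t = p" using IVT[of F a p q, OF pFa pq aq cont] by blast
    then have "t \<in> S" by (simp add: S_def)
    then have "q \<le> t" unfolding q_def' using bdd by (rule cInf_lower)
    with t show ?thesis by simp
  qed
  have feas: "q \<in> feasible a p (1 - F a) (f a) (- deriv f a)"
    unfolding feasible_def
  proof (intro CollectI conjI exI[of _ f])
    show "a \<le> q" by (rule aq)
    show "(f has_integral (p - (1 - (1 - F a)))) {a..q}"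
      using F_int[OF f_density aq] Fq by simp
    show "(f has_integral (1 - F a)) {a..}"
    proof (rule has_integral_to_inf)
      show "f integrable_on {a..y}" for y
        using f_density by (intro integrable_on_subinterval[of f "{..y}"]) auto
      show "f y \<ge> 0" for y using f_nonneg by auto
      have "eventually (\<lambda>y. F y - F a = integral {a..y} f) at_top"
        using eventually_ge_at_top[of a]
      proof eventually_elim
        case (elim y) then show ?case using F_int[OF f_density elim] by (simp add: integral_unique)
      qed
      moreover have "((\<lambda>y. F y - F a) \<longlongrightarrow> 1 - F a) at_top"
        by (intro tendsto_diff F_top tendsto_const)
      ultimately show "((\<lambda>y. integral {a..y} f) \<longlongrightarrow> 1 - F a) at_top"
        using tendsto_cong by fastforce
    qed
    show "f a = f a" ..
    have dfa: "(f has_real_derivative deriv f a) (at a)"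
      using df[OF az] by (simp add: DERIV_deriv_iff_real_differentiable)
    show "(f \<longlongrightarrow> f a) (at_right a)"
      using DERIV_isCont[OF dfa] by (simp add: isCont_def filterlim_at_split)
    show "\<exists>d. (f has_real_derivative d) (at a within {a..}) \<and> - (- deriv f a) \<le> d"
      using dfa by (intro exI[of _ "deriv f a"]) (auto intro: has_field_derivative_at_within)
    show "convex_on {a..} f" using az by (intro convex_on_subset[OF cvx]) auto
    show "\<forall>t\<ge>a. 0 \<le> f t" using f_nonneg by auto
  qed
  have ub: "q' \<le> a + f a / (- deriv f a)" if q': "q' \<in> feasible a p (1 - F a) (f a) (- deriv f a)" for q'
  proof (rule ccontr)
    assume "\<not> ?thesis"
    then have big: "q' > a + f a / (- deriv f a)" by simp
    from q' obtain g d where g: "(g has_integral (p - (1 - (1 - F a)))) {a..q'}"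
      "g a = f a" "(g has_real_derivative d) (at a within {a..})" "- (- deriv f a) \<le> d"
      "convex_on {a..} g" "\<forall>t\<ge>a. g t \<ge> 0"
      unfolding feasible_def by blast
    have "p - (1 - (1 - F a)) \<ge> (f a)^2 / (2 * (- deriv f a))"
      using integral_lower[OF g(5) g(3) g(4) g(2) g(6) nu eta g(1) big] .
    moreover have "p - (1 - (1 - F a)) = (1 - x) * (1 - F a)" by (simp add: p_def algebra_simps)
    ultimately have le: "(f a)^2 / (2 * (- deriv f a)) \<le> (1 - x) * (1 - F a)" by simp
    have pos2: "2 * (- deriv f a) > 0" using nu by simp
    have "(f a)^2 \<le> (1 - x) * (1 - F a) * (2 * (- deriv f a))"
      using le unfolding pos_divide_le_eq[OF pos2] .
    then have "1 \<le> 2 * (1 - x) * ((1 - F a) * (- deriv f a) / (f a)^2)"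
      using eta by (simp add: field_simps)
    then show False using small by simp
  qed
  show ?thesis using aq feas ub by (simp add: p_def q_def)
qed

theorem theorem8:
  fixes F f :: "real \<Rightarrow> real" and x :: real
  assumes F_mono: "mono F"
    and F_cont: "continuous_on UNIV F"
    and F_bot: "(F \<longlongrightarrow> 0) at_bot"
    and F_top: "(F \<longlongrightarrow> 1) at_top"
    and f_nonneg: "\<forall>t. f t \<ge> 0"
    and f_density: "\<forall>t. (f has_integral F t) {..t}"
    and A1: "assumption_A1 F f"
    and MDA: "MDA_Gumbel F"
    and A3: "assumption_A3 F f"
    and xF_inf: "\<forall>t. F t < 1"
    and x_gt: "1/2 < x" and x_le: "x \<le> 1"
  shows "((\<lambda>a. qstar F f x a / ereal (quantile F (1 - x * (1 - F a)))) \<longlongrightarrow> 1) at_top"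
proof -
  obtain z where cvx: "convex_on {z<..} f"
    and H: "\<forall>t>z. (F has_real_derivative f t) (at t) \<and> f differentiable (at t) \<and> f t > 0"
    and fdec: "\<forall>s t. z < s \<and> s \<le> t \<longrightarrow> f t \<le> f s"
    using A1 unfolding assumption_A1_def by blast
  have dF: "\<And>t. t > z \<Longrightarrow> (F has_real_derivative f t) (at t)" using H by blast
  have df: "\<And>t. t > z \<Longrightarrow> f differentiable (at t)" using H by blast
  have fpos: "\<And>t. t > z \<Longrightarrow> f t > 0" using H by blast
  have fdec': "\<And>s t. z < s \<Longrightarrow> s \<le> t \<Longrightarrow> f t \<le> f s" using fdec by blast
  define k where "k t = (1 - F t) * deriv f t / (f t)^2" for t
  have A3': "(k \<longlongrightarrow> -1) at_top" using A3 unfolding assumption_A3_def k_def[abs_def] .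
  have R: "((\<lambda>t. (1 - F t) / f t / t) \<longlongrightarrow> 0) at_top"
    using ratio_zero[of z F f] dF df fpos xF_inf A3 unfolding assumption_A3_def by blast
  have ev_k: "eventually (\<lambda>a. k a < 0) at_top"
    using A3' by (rule order_tendstoD) simp
  have "((\<lambda>a. 2 * (1 - x) * (- k a)) \<longlongrightarrow> 2 * (1 - x) * (- (-1))) at_top"
    by (intro tendsto_mult tendsto_minus tendsto_const A3')
  moreover have "2 * (1 - x) * (- (-1)) < (1::real)" using x_gt by simp
  ultimately have ev_s: "eventually (\<lambda>a. 2 * (1 - x) * (- k a) < 1) at_top"
    by (rule order_tendstoD)
  define Q where "Q a = quantile F (1 - x * (1 - F a))" for a
  define c where "c a = a + f a / (- deriv f a)" for a
  define u where "u a = real_of_ereal (qstar F f x a) / Q a" for a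
  have ev: "eventually (\<lambda>a. qstar F f x a / ereal (Q a) = ereal (u a) \<and> 1 \<le> u a \<and>
       u a \<le> 1 + f a / (- deriv f a) / a \<and>
       f a / (- deriv f a) / a = inverse (- k a) * ((1 - F a) / f a / a)) at_top"
    using ev_k ev_s eventually_gt_at_top[of "max z 0"]
  proof eventually_elim
    case (elim a)
    have az: "a > z" "a > 0" using elim by auto
    have beta: "1 - F a > 0" using xF_inf by auto
    have eta: "f a > 0" using fpos az by auto
    have dneg: "deriv f a < 0"
    proof (rule ccontr)
      assume "\<not> deriv f a < 0"
      then have "k a \<ge> 0" using beta by (simp add: k_def)
      then show False using elim by simp
    qed
    have small: "2 * (1 - x) * ((1 - F a) * (- deriv f a) / (f a)^2) < 1"
      using elim(2) by (simp add: k_def)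
    have K: "a \<le> Q a \<and> Q a \<in> feasible a (1 - x * (1 - F a)) (1 - F a) (f a) (- deriv f a) \<and>
         (\<forall>q'\<in>feasible a (1 - x * (1 - F a)) (1 - F a) (f a) (- deriv f a). q' \<le> c a)"
      unfolding Q_def c_def
      by (rule key[OF F_mono F_cont F_top f_nonneg f_density cvx df fpos fdec' xF_inf x_gt x_le az(1) dneg small])
    define A where "A = ereal ` feasible a (1 - x * (1 - F a)) (1 - F a) (f a) (- deriv f a)"
    have qs: "qstar F f x a = Sup A" by (simp add: qstar_def A_def)
    have lo: "ereal (Q a) \<le> Sup A" using K unfolding A_def by (intro Sup_upper) auto
    have hi: "Sup A \<le> ereal (c a)" using K unfolding A_def by (intro Sup_least) auto
    obtain r where r: "Sup A = ereal r" using lo hi by (cases "Sup A") auto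
    have rQ: "Q a \<le> r" "r \<le> c a" using lo hi r by auto
    have Qpos: "Q a > 0" using K az by auto
    have ur: "u a = r / Q a" by (simp add: u_def qs r)
    have e1: "qstar F f x a / ereal (Q a) = ereal (u a)" using Qpos by (simp add: qs r ur)
    have e2: "1 \<le> u a" using rQ Qpos by (simp add: ur)
    have "r / Q a \<le> c a / Q a" using rQ Qpos by (simp add: divide_right_mono)
    also have "\<dots> \<le> c a / a"
    proof -
      have "f a / (- deriv f a) > 0" using eta dneg by (intro divide_pos_pos) auto
      then have "c a > 0" using az by (simp add: c_def)
      then show ?thesis using K az by (intro divide_left_mono) auto
    qed
    also have "\<dots> = 1 + f a / (- deriv f a) / a" using az by (simp add: c_def field_simps)
    finally have e3: "u a \<le> 1 + f a / (- deriv f a) / a" by (simp add: ur)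
    have e4: "f a / (- deriv f a) / a = inverse (- k a) * ((1 - F a) / f a / a)"
      using az eta beta dneg by (simp add: k_def field_simps power2_eq_square)
    show ?case using e1 e2 e3 e4 by blast
  qed
  have lim_up: "((\<lambda>a. 1 + f a / (- deriv f a) / a) \<longlongrightarrow> 1) at_top"
  proof -
    have "((\<lambda>a. inverse (- k a) * ((1 - F a) / f a / a)) \<longlongrightarrow> inverse (- (-1)) * 0) at_top"
      by (rule tendsto_mult[OF tendsto_inverse[OF tendsto_minus[OF A3']] R]) simp
    then have l1: "((\<lambda>a. inverse (- k a) * ((1 - F a) / f a / a)) \<longlongrightarrow> 0) at_top" by simp
    have e: "eventually (\<lambda>a. inverse (- k a) * ((1 - F a) / f a / a) = f a / (- deriv f a) / a) at_top"
      by (rule eventually_mono[OF ev]) simp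
    have "((\<lambda>a. f a / (- deriv f a) / a) \<longlongrightarrow> 0) at_top"
      by (rule Lim_transform_eventually[OF l1 e])
    from tendsto_add[OF tendsto_const[of 1] this] show ?thesis by simp
  qed
  have "(u \<longlongrightarrow> 1) at_top"
  proof (rule tendsto_sandwich[OF _ _ tendsto_const lim_up])
    show "eventually (\<lambda>a. 1 \<le> u a) at_top" by (rule eventually_mono[OF ev]) blast
    show "eventually (\<lambda>a. u a \<le> 1 + f a / (- deriv f a) / a) at_top"
      by (rule eventually_mono[OF ev]) blast
  qed
  then have l2: "((\<lambda>a. ereal (u a)) \<longlongrightarrow> ereal 1) at_top" by simp
  have e2: "eventually (\<lambda>a. ereal (u a) = qstar F f x a / ereal (Q a)) at_top"
    by (rule eventually_mono[OF ev]) simp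
  have "((\<lambda>a. qstar F f x a / ereal (Q a)) \<longlongrightarrow> ereal 1) at_top"
    by (rule Lim_transform_eventually[OF l2 e2])
  then show ?thesis by (simp add: Q_def one_ereal_def)
qed

end
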